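(* Let $(S,* )$ be a finite cycle set with structure monoid $M$ and permutation group $\mathcal G$. Then there is a (unique) binary operation $+$ on $\mathcal G$ such that $\psi(g+h)=\psi(g)+\psi(h)$ for all $g,h\in M$, and $(\mathcal G,+)$ is an abelian group; i.e. the commutative structure $(M,+)$ induces an abelian group structure on $\mathcal G$ compatible with $\psi\colon M\to\mathcal G$.
   Context: A cycle set is a set $S$ with a binary operation $*$ such that each $t\mapsto s*t$ is bijective and $(s*t)*(s*u)=(t*s)*(t*u)$ for all $s,t,u$. Write $S=\{s_1,\dots,s_n\}$, let $\psi(s)\in\mathfrak S_n$ satisfy $s_i*s_j=s_{\psi(s_i)(j)}$, and $\mathcal G=\langle\psi(s_1),\dots,\psi(s_n)\rangle\le\mathfrak S_n$. The structure group $G$ (resp. monoid $M$) has group (resp. monoid) presentation $\langle S\mid s(s*t)=t(t*s),\ s\neq t\rangle$; $M$ embeds in $G$. For $\sigma\in\mathfrak S_n$, $P_\sigma$ is the matrix with $1$ at $(i,\sigma(i))$. The assignment $s_i\mapsto\mathrm{diag}(1,\dots,q,\dots,1)P_{\psi(s_i)}$ ($q$ an indeterminate, in position $i$) extends to a faithful representation $\Theta$ of $G$ by monomial matrices; write $\Theta(g)=D_gP_{\psi(g)}$ with $D_g=\mathrm{diag}(q^{c_1},\dots,q^{c_n})$, which defines $\psi(g)\in\mathcal G$ (so $\psi(gh)=\psi(h)\circ\psi(g)$). The map $g\mapsto(c_1,\dots,c_n)$ is a bijection $G\to\mathbb Z^n$ restricting to a bijection $M\to\mathbb N^n$. For $g,h\in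 G$, $g+h$ denotes the unique element of $G$ with $D_{g+h}=D_gD_h$; $(G,+)$ is an abelian group and $M$ is closed under $+$. *)

theory Defs
  imports "HOL-Algebra.Bij" "HOL-Algebra.Generated_Groups"
begin

definition cycle_set :: "'a set \<Rightarrow> ('a \<Rightarrow> 'a \<Rightarrow> 'a) \<Rightarrow> bool" where
  "cycle_set S star \<longleftrightarrow>
     (\<forall>s\<in>S. bij_betw (star s) S S) \<and>
     (\<forall>s\<in>S. \<forall>t\<in>S. \<forall>u\<in>S. star (star s t) (star s u) = star (star t s) (star t u))"

definition psi :: "'a set \<Rightarrow> ('a \<Rightarrow> 'a \<Rightarrow> 'a) \<Rightarrow> 'a \<Rightarrow> ('a \<Rightarrow> 'a)" where
  "psi S star s = (\<lambda>t\<in>S. star s t)"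

definition perm_group :: "'a set \<Rightarrow> ('a \<Rightarrow> 'a \<Rightarrow> 'a) \<Rightarrow> ('a \<Rightarrow> 'a) set" where
  "perm_group S star = generate (BijGroup S) (psi S star ` S)"

text \<open>Monomial matrices D P_sigma, with D = diag(q^c_i), represented as (c, sigma).
  Product: (D_g P_s)(D_h P_t) = D_g (P_s D_h P_s^-1) P_s P_t, whose exponent vector is
  i maps to c i + d (s i), and whose permutation is t o s.\<close>
definition mono_mult :: "'a set \<Rightarrow> ('a \<Rightarrow> nat) \<times> ('a \<Rightarrow> 'a) \<Rightarrow> ('a \<Rightarrow> nat) \<times> ('a \<Rightarrow> 'a)
                           \<Rightarrow> ('a \<Rightarrow> nat) \<times> ('a \<Rightarrow> 'a)" where
  "mono_mult S x y = ((\<lambda>i. if i \<in> S then fst x i + fst y (snd x i) else 0),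
                      compose S (snd y) (snd x))"

definition theta_gen :: "'a set \<Rightarrow> ('a \<Rightarrow> 'a \<Rightarrow> 'a) \<Rightarrow> 'a \<Rightarrow> ('a \<Rightarrow> nat) \<times> ('a \<Rightarrow> 'a)" where
  "theta_gen S star s = ((\<lambda>i. if i = s then 1 else 0), psi S star s)"

text \<open>Theta of a word s_1 ... s_k (a representative of an element of the structure monoid M).\<close>
fun theta :: "'a set \<Rightarrow> ('a \<Rightarrow> 'a \<Rightarrow> 'a) \<Rightarrow> 'a list \<Rightarrow> ('a \<Rightarrow> nat) \<times> ('a \<Rightarrow> 'a)" where
  "theta S star [] = ((\<lambda>_. 0), (\<lambda>x\<in>S. x))"
| "theta S star (s # xs) = mono_mult S (theta_gen S star s) (theta S star xs)"

definition D_word :: "'a set \<Rightarrow> ('a \<Rightarrow> 'a \<Rightarrow> 'a) \<Rightarrow> 'a list \<Rightarrow> ('a \<Rightarrow> nat)" where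
  "D_word S star xs = fst (theta S star xs)"

definition psi_word :: "'a set \<Rightarrow> ('a \<Rightarrow> 'a \<Rightarrow> 'a) \<Rightarrow> 'a list \<Rightarrow> ('a \<Rightarrow> 'a)" where
  "psi_word S star xs = snd (theta S star xs)"

text \<open>Compatibility of a binary operation on the permutation group with the addition of M:
  whenever D_h'' = D_g D_h (i.e. h'' = g + h in M), psi(g + h) = psi(g) + psi(h).\<close>
definition compatible_add :: "'a set \<Rightarrow> ('a \<Rightarrow> 'a \<Rightarrow> 'a) \<Rightarrow>
     (('a \<Rightarrow> 'a) \<Rightarrow> ('a \<Rightarrow> 'a) \<Rightarrow> ('a \<Rightarrow> 'a)) \<Rightarrow> bool" where
  "compatible_add S star add \<longleftrightarrow>
     (\<forall>xs ys zs. set xs \<subseteq> S \<longrightarrow> set ys \<subseteq> S \<longrightarrow> set zs \<subseteq> S \<longrightarrow>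
        D_word S star zs = (\<lambda>i. D_word S star xs i + D_word S star ys i) \<longrightarrow>
        psi_word S star zs = add (psi_word S star xs) (psi_word S star ys))"

end

theory Submission imports Defs "HOL-Algebra.Multiplicative_Group" begin

locale cs =
  fixes S :: "'a set" and star :: "'a \<Rightarrow> 'a \<Rightarrow> 'a"
  assumes fin: "finite S" and cyc: "cycle_set S star"
begin

abbreviation "sg \<equiv> psi_word S star"
abbreviation "DD \<equiv> D_word S star"

lemma bij_star: "s \<in> S \<Longrightarrow> bij_betw (star s) S S"
  using cyc by (simp add: cycle_set_def)

lemma star_in: "s \<in> S \<Longrightarrow> i \<in> S \<Longrightarrow> star s i \<in> S"
  using bij_star bij_betwE by blast

lemma star_inj: "s \<in> S \<Longrightarrow> i \<in> S \<Longrightarrow> j \<in> S \<Longrightarrow> star s i = star s j \<longleftrightarrow> i = j"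
  using bij_star bij_betw_imp_inj_on inj_on_eq_iff by metis

lemma star_img: "s \<in> S \<Longrightarrow> star s ` S = S"
  using bij_star bij_betw_imp_surj_on by blast

lemma cyc_id: "s \<in> S \<Longrightarrow> t \<in> S \<Longrightarrow> u \<in> S \<Longrightarrow> star (star s t) (star s u) = star (star t s) (star t u)"
  using cyc by (simp add: cycle_set_def)

lemma D_Nil: "DD [] = (\<lambda>_. 0)" by (simp add: D_word_def)
lemma sg_Nil: "sg [] = (\<lambda>x\<in>S. x)" by (simp add: psi_word_def)

lemma D_Cons: "DD (s#w) = (\<lambda>i. if i \<in> S then (if i = s then 1 else 0) + DD w (star s i) else 0)"
  by (auto simp: D_word_def mono_mult_def theta_gen_def psi_def fun_eq_iff)

lemma sg_Cons: "sg (s#w) = compose S (sg w) (psi S star s)"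
  by (simp add: psi_word_def mono_mult_def theta_gen_def)

lemma psi_Bij: "s \<in> S \<Longrightarrow> psi S star s \<in> Bij S"
  using bij_star by (auto simp: Bij_def psi_def bij_betw_restrict_eq)

lemma sg_Bij: "set w \<subseteq> S \<Longrightarrow> sg w \<in> Bij S"
  by (induction w) (auto simp: sg_Nil sg_Cons id_Bij compose_Bij psi_Bij)

lemma sg_ext: "set w \<subseteq> S \<Longrightarrow> i \<notin> S \<Longrightarrow> sg w i = undefined"
  using sg_Bij Bij_imp_extensional extensional_arb by metis

lemma sg_in: "set w \<subseteq> S \<Longrightarrow> i \<in> S \<Longrightarrow> sg w i \<in> S"
  using sg_Bij Bij_imp_funcset by blast

lemma D_out: "i \<notin> S \<Longrightarrow> DD w i = 0"
  by (cases w) (auto simp: D_Nil D_Cons)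

lemma D_sum: "set w \<subseteq> S \<Longrightarrow> (\<Sum>i\<in>S. DD w i) = length w"
proof (induction w)
  case Nil then show ?case by (simp add: D_Nil)
next
  case (Cons s w)
  have "(\<Sum>i\<in>S. DD (s#w) i) = (\<Sum>i\<in>S. (if i = s then 1 else 0) + DD w (star s i))"
    by (rule sum.cong) (auto simp: D_Cons)
  also have "\<dots> = (\<Sum>i\<in>S. (if i = s then 1 else 0)) + (\<Sum>i\<in>S. DD w (star s i))"
    by (rule sum.distrib)
  also have "(\<Sum>i\<in>S. (if i = s then 1 else 0)) = (1::nat)"
    using Cons.prems fin by simp
  also have "(\<Sum>i\<in>S. DD w (star s i)) = (\<Sum>i\<in>S. DD w i)"
    using sum.reindex_bij_betw[OF bij_star, of s "DD w"] Cons.prems by simp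
  finally show ?case using Cons by simp
qed

lemma split_vec:
  fixes c :: "'a \<Rightarrow> nat"
  assumes x: "x \<in> S" and cx: "c x \<ge> 1" and c0: "\<forall>i. i \<notin> S \<longrightarrow> c i = 0"
  shows "\<exists>d. (\<forall>i. i \<notin> S \<longrightarrow> d i = 0) \<and> (\<Sum>j\<in>S. d j) + 1 = (\<Sum>i\<in>S. c i) \<and>
             (\<lambda>i. if i\<in>S then (if i = x then 1 else 0) + d (star x i) else 0) = c"
proof -
  define h where "h = inv_into S (star x)"
  define d where "d = (\<lambda>j. if j \<in> S then c (h j) - (if h j = x then 1 else 0) else 0)"
  have hd: "h (star x i) = i" if "i \<in> S" for i
    unfolding h_def using that bij_star[OF x] bij_betw_imp_inj_on inv_into_f_f by metis
  have dd: "d (star x i) = c i - (if i = x then 1 else 0)" if "i \<in> S" for i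
    using that hd star_in[OF x that] by (simp add: d_def)
  have "(\<Sum>j\<in>S. d j) = (\<Sum>i\<in>S. d (star x i))"
    using sum.reindex_bij_betw[OF bij_star[OF x], of d] by simp
  also have "\<dots> = (\<Sum>i\<in>S. c i - (if i = x then 1 else 0))"
    by (rule sum.cong) (auto simp: dd)
  finally have s1: "(\<Sum>j\<in>S. d j) = (\<Sum>i\<in>S. c i - (if i = x then 1 else 0))" .
  have "(\<Sum>i\<in>S. c i) = (\<Sum>i\<in>S. (c i - (if i = x then 1 else 0)) + (if i = x then 1 else 0))"
    by (rule sum.cong) (use cx in auto)
  also have "\<dots> = (\<Sum>i\<in>S. c i - (if i = x then 1 else 0)) + 1"
    using x fin by (simp add: sum.distrib)
  finally have s2: "(\<Sum>j\<in>S. d j) + 1 = (\<Sum>i\<in>S. c i)" using s1 by simp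
  have "(\<lambda>i. if i\<in>S then (if i = x then 1 else 0) + d (star x i) else 0) = c"
    using c0 cx by (auto simp: fun_eq_iff dd)
  moreover have "\<forall>i. i \<notin> S \<longrightarrow> d i = 0" by (simp add: d_def)
  ultimately show ?thesis using s2 by blast
qed

lemma surj_aux: "(\<Sum>i\<in>S. (c::'a\<Rightarrow>nat) i) = n \<Longrightarrow> \<forall>i. i \<notin> S \<longrightarrow> c i = 0 \<Longrightarrow> \<exists>w. set w \<subseteq> S \<and> DD w = c"
proof (induction n arbitrary: c)
  case 0
  then have "c = (\<lambda>_. 0)" using fin by (auto simp: fun_eq_iff)
  then show ?case by (intro exI[of _ "[]"]) (simp add: D_Nil)
next
  case (Suc n)
  then obtain x where x: "x \<in> S" "c x \<ge> 1"
    by (metis Suc_neq_Zero less_one not_le sum.neutral)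
  from split_vec[of x c] x Suc.prems obtain d where d: "\<forall>i. i \<notin> S \<longrightarrow> d i = 0"
    "(\<Sum>j\<in>S. d j) + 1 = (\<Sum>i\<in>S. c i)"
    "(\<lambda>i. if i\<in>S then (if i = x then 1 else 0) + d (star x i) else 0) = c" by blast
  from Suc.IH[of d] d Suc.prems obtain w where w: "set w \<subseteq> S" "DD w = d" by auto
  have "DD (x#w) = c" unfolding D_Cons w(2) by (rule d(3))
  then show ?case using x w by (intro exI[of _ "x#w"]) simp
qed

lemma surj: "\<forall>i. i \<notin> S \<longrightarrow> (c::'a\<Rightarrow>nat) i = 0 \<Longrightarrow> \<exists>w. set w \<subseteq> S \<and> DD w = c"
  using surj_aux by blast

lemma split_word:
  assumes "set w \<subseteq> S" "x \<in> S" "DD w x \<ge> 1"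
  shows "\<exists>w'. set w' \<subseteq> S \<and> DD (x#w') = DD w"
proof -
  from split_vec[of x "DD w"] assms D_out obtain d where d: "\<forall>i. i \<notin> S \<longrightarrow> d i = 0"
    "(\<lambda>i. if i\<in>S then (if i = x then 1 else 0) + d (star x i) else 0) = DD w" by blast
  from surj[OF d(1)] obtain w' where w': "set w' \<subseteq> S" "DD w' = d" by blast
  have "DD (x#w') = DD w" unfolding D_Cons w'(2) by (rule d(2))
  then show ?thesis using w' by blast
qed


lemma len_eq: "set w \<subseteq> S \<Longrightarrow> set w' \<subseteq> S \<Longrightarrow> DD w = DD w' \<Longrightarrow> length w = length w'"
  using D_sum by metis

lemma wd: "set w \<subseteq> S \<Longrightarrow> set w' \<subseteq> S \<Longrightarrow> DD w = DD w' \<Longrightarrow> sg w = sg w'"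
proof (induction "length w" arbitrary: w w' rule: less_induct)
  case less
  show ?case
  proof (cases w)
    case Nil
    then have "w' = []" using len_eq[OF less.prems] by simp
    then show ?thesis using Nil by simp
  next
    case (Cons s u)
    obtain t v where w': "w' = t # v" using len_eq[OF less.prems] Cons by (cases w') auto
    have s: "s \<in> S" "set u \<subseteq> S" using less.prems Cons by auto
    have t: "t \<in> S" "set v \<subseteq> S" using less.prems w' by auto
    have c: "DD (s#u) = DD (t#v)" using less.prems Cons w' by simp
    have lw: "length w' = length w" using len_eq[OF less.prems] by simp
    show ?thesis
    proof (cases "s = t")
      case True
      have "DD u = DD v"
      proof
        fix j show "DD u j = DD v j"
        proof (cases "j \<in> S")
          case False then show ?thesis by (simp add: D_out)
        next
          case True
          then obtain i where i: "i \<in> S" "j = star s i" using star_img[OF s(1)] by blast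
          from fun_cong[OF c, of i] i \<open>s = t\<close> show ?thesis by (simp add: D_Cons)
        qed
      qed
      then have "sg u = sg v" using less.hyps[of u v] s t Cons by simp
      then show ?thesis using Cons w' True by (simp add: sg_Cons)
    next
      case False
      define st where "st = star s t"
      define ts where "ts = star t s"
      have stS: "st \<in> S" "ts \<in> S" using s t star_in st_def ts_def by auto
      have "DD u st \<ge> 1" using fun_cong[OF c, of t] False s t by (simp add: D_Cons st_def)
      then obtain u2 where u2: "set u2 \<subseteq> S" "DD (st#u2) = DD u" using split_word s stS by blast
      have "DD v ts \<ge> 1" using fun_cong[OF c, of s] False s t by (simp add: D_Cons ts_def)
      then obtain v2 where v2: "set v2 \<subseteq> S" "DD (ts#v2) = DD v" using split_word t stS by blast
      have lu: "length u = Suc (length u2)" using len_eq[of "st#u2" u] u2 s stS by simp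
      have lv: "length v = Suc (length v2)" using len_eq[of "ts#v2" v] v2 t stS by simp
      have su: "sg u = sg (st#u2)" using less.hyps[of u "st#u2"] Cons u2 s stS by simp
      have sv: "sg v = sg (ts#v2)" using less.hyps[of v "ts#v2"] Cons lw w' v2 t stS by simp
      have key: "DD u2 (star st (star s i)) = DD v2 (star ts (star t i))" if i: "i \<in> S" for i
      proof -
        have a: "DD u (star s i) = (if i = t then 1 else 0) + DD u2 (star st (star s i))"
          using fun_cong[OF u2(2), of "star s i"] star_in[OF s(1) i] star_inj[OF s(1) i t(1)]
          by (simp add: D_Cons st_def)
        have b: "DD v (star t i) = (if i = s then 1 else 0) + DD v2 (star ts (star t i))"
          using fun_cong[OF v2(2), of "star t i"] star_in[OF t(1) i] star_inj[OF t(1) i s(1)]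
          by (simp add: D_Cons ts_def)
        show ?thesis using fun_cong[OF c, of i] i a b by (simp add: D_Cons)
      qed
      have eqphi: "star st (star s i) = star ts (star t i)" if "i \<in> S" for i
        using cyc_id[OF s(1) t(1) that] by (simp add: st_def ts_def)
      have "DD u2 = DD v2"
      proof
        fix j show "DD u2 j = DD v2 j"
        proof (cases "j \<in> S")
          case False then show ?thesis by (simp add: D_out)
        next
          case True
          then obtain i where i: "i \<in> S" "j = star st (star s i)"
            using star_img[OF s(1)] star_img[OF stS(1)] by (metis imageE)
          then show ?thesis using key[OF i(1)] eqphi[OF i(1)] by simp
        qed
      qed
      then have s2: "sg u2 = sg v2" using less.hyps[of u2 v2] u2 v2 Cons lu by simp
      show ?thesis
      proof
        fix i
        show "sg w i = sg w' i"
        proof (cases "i \<in> S")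
          case False then show ?thesis using less.prems sg_ext by metis
        next
          case True
          then show ?thesis using Cons w' su sv s2 eqphi[OF True] star_in[OF s(1) True] star_in[OF t(1) True]
            by (simp add: sg_Cons compose_def psi_def)
        qed
      qed
    qed
  qed
qed

lemma app_both: "set u \<subseteq> S \<Longrightarrow> set w \<subseteq> S \<Longrightarrow> DD (w @ u) = (\<lambda>i. if i \<in> S then DD w i + DD u (sg w i) else 0) \<and> sg (w @ u) = compose S (sg u) (sg w)"
proof (induction w)
  case Nil
  have "DD ([] @ u) = (\<lambda>i. if i \<in> S then DD [] i + DD u (sg [] i) else 0)"
    by (auto simp: fun_eq_iff D_out D_Nil sg_Nil)
  moreover have "sg ([] @ u) = compose S (sg u) (sg [])"
    using Nil sg_ext by (auto simp: fun_eq_iff compose_def sg_Nil)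
  ultimately show ?case by blast
next
  case (Cons a w)
  then have a: "a \<in> S" and IH: "DD (w @ u) = (\<lambda>i. if i \<in> S then DD w i + DD u (sg w i) else 0)"
      "sg (w @ u) = compose S (sg u) (sg w)" by auto
  have "DD ((a#w) @ u) = (\<lambda>i. if i \<in> S then DD (a#w) i + DD u (sg (a#w) i) else 0)"
    using a star_in[OF a] by (auto simp: fun_eq_iff D_Cons IH sg_Cons compose_def psi_def)
  moreover have "sg ((a#w) @ u) = compose S (sg u) (sg (a#w))"
    using IH(2) compose_assoc[of "psi S star a" S S "sg u" "sg w"] Bij_imp_funcset[OF psi_Bij[OF a]]
    by (simp add: sg_Cons)
  ultimately show ?case by blast
qed

lemma D_app: "set u \<subseteq> S \<Longrightarrow> set w \<subseteq> S \<Longrightarrow> DD (w @ u) = (\<lambda>i. if i \<in> S then DD w i + DD u (sg w i) else 0)"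
  using app_both by blast

lemma sg_app: "set u \<subseteq> S \<Longrightarrow> set w \<subseteq> S \<Longrightarrow> sg (w @ u) = compose S (sg u) (sg w)"
  using app_both by blast


abbreviation "GB \<equiv> BijGroup S"

lemma GB_group: "group GB" by (rule group_BijGroup)

lemma GB_mult: "f \<in> Bij S \<Longrightarrow> g \<in> Bij S \<Longrightarrow> f \<otimes>\<^bsub>GB\<^esub> g = compose S f g"
  by (simp add: BijGroup_def)

lemma sg_pow: "set w \<subseteq> S \<Longrightarrow> sg (concat (replicate n w)) = sg w [^]\<^bsub>GB\<^esub> n"
proof (induction n)
  case 0 then show ?case by (simp add: sg_Nil BijGroup_def)
next
  case (Suc n)
  have r: "set (concat (replicate n w)) \<subseteq> S" using Suc.prems by auto
  have p: "sg w [^]\<^bsub>GB\<^esub> n \<in> carrier GB"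
    by (rule monoid.nat_pow_closed[OF group.is_monoid[OF GB_group]]) (use sg_Bij[OF Suc.prems] in \<open>simp only: BijGroup_def partial_object.simps\<close>)
  then have p': "sg w [^]\<^bsub>GB\<^esub> n \<in> Bij S" by (simp only: BijGroup_def partial_object.simps)
  have "sg (concat (replicate (Suc n) w)) = compose S (sg (concat (replicate n w))) (sg w)"
    using sg_app[OF r Suc.prems] by simp
  also have "\<dots> = compose S (sg w [^]\<^bsub>GB\<^esub> n) (sg w)"
    by (simp only: Suc.IH[OF Suc.prems])
  also have "\<dots> = sg w [^]\<^bsub>GB\<^esub> n \<otimes>\<^bsub>GB\<^esub> sg w"
    by (rule GB_mult[symmetric, OF p' sg_Bij[OF Suc.prems]])
  also have "\<dots> = sg w [^]\<^bsub>GB\<^esub> Suc n" by (rule nat_pow_Suc[symmetric])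
  finally show ?case .
qed

lemma GB_finite: "finite (carrier GB)"
proof -
  have "carrier GB \<subseteq> S \<rightarrow>\<^sub>E S" by (auto simp: BijGroup_def Bij_def bij_betw_def PiE_def extensional_def)
  moreover have "finite (S \<rightarrow>\<^sub>E S)" using fin by (simp add: finite_PiE)
  ultimately show ?thesis using finite_subset by blast
qed

lemma inv_word: "set w \<subseteq> S \<Longrightarrow> \<exists>u. set u \<subseteq> S \<and> sg (w @ u) = (\<lambda>x\<in>S. x)"
proof -
  assume w: "set w \<subseteq> S"
  define k where "k = order GB"
  have "one GB \<in> carrier GB" using group.is_monoid[OF GB_group] monoid.one_closed by blast
  then have "k > 0" using GB_finite unfolding k_def order_def
    using card_gt_0_iff by blast
  then have k1: "k \<ge> 1" by simp
  have "sg w [^]\<^bsub>GB\<^esub> k = one GB"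
    unfolding k_def by (rule group.pow_order_eq_1[OF GB_group]) (use sg_Bij[OF w] in \<open>simp add: BijGroup_def\<close>)
  moreover have "w @ concat (replicate (k - 1) w) = concat (replicate k w)"
    using k1 by (cases k) auto
  ultimately have "sg (w @ concat (replicate (k - 1) w)) = (\<lambda>x\<in>S. x)"
    using sg_pow[OF w, of k] by (simp add: BijGroup_def)
  moreover have "set (concat (replicate (k - 1) w)) \<subseteq> S" using w by auto
  ultimately show ?thesis by blast
qed

lemma pg: "perm_group S star = sg ` {w. set w \<subseteq> S}"
proof
  show "perm_group S star \<subseteq> sg ` {w. set w \<subseteq> S}"
    unfolding perm_group_def
  proof
    fix x assume "x \<in> generate GB (psi S star ` S)"
    then show "x \<in> sg ` {w. set w \<subseteq> S}"
    proof (induction rule: generate.induct)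
      case one
      then show ?case by (rule image_eqI[of _ _ "[]"]) (simp_all add: sg_Nil BijGroup_def)
    next
      case (incl h)
      then obtain s where s: "s \<in> S" "h = psi S star s" by blast
      have hsg: "sg [s] = h" using s Bij_imp_extensional[OF psi_Bij[OF s(1)]] star_in[OF s(1)]
        by (auto simp: sg_Cons sg_Nil compose_def fun_eq_iff psi_def)
      have "[s] \<in> {w. set w \<subseteq> S}" using s by simp
      from image_eqI[of h sg "[s]", OF sym[OF hsg] this] show ?case .
    next
      case (inv h)
      then obtain s where s: "s \<in> S" "h = psi S star s" by blast
      obtain u where u: "set u \<subseteq> S" "sg ([s] @ u) = (\<lambda>x\<in>S. x)" using inv_word[of "[s]"] s by auto
      have hs: "sg [s] = h" using s Bij_imp_extensional[OF psi_Bij[OF s(1)]] star_in[OF s(1)]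
        by (auto simp: sg_Cons sg_Nil compose_def fun_eq_iff psi_def)
      have "sg u \<otimes>\<^bsub>GB\<^esub> h = one GB"
        using u sg_app[of u "[s]"] s hs GB_mult sg_Bij psi_Bij by (simp add: BijGroup_def)
      then have "inv\<^bsub>GB\<^esub> h = sg u"
        using group.inv_equality[OF GB_group, of "sg u" h] sg_Bij[OF u(1)] psi_Bij[OF s(1)] s
        by (simp add: BijGroup_def)
      then show ?case using u by auto
    next
      case (eng h1 h2)
      then obtain w1 w2 where w: "set w1 \<subseteq> S" "set w2 \<subseteq> S" "h1 = sg w1" "h2 = sg w2" by auto
      have "h1 \<otimes>\<^bsub>GB\<^esub> h2 = sg (w2 @ w1)" using w sg_app[of w1 w2] GB_mult sg_Bij by simp
      then show ?case using w by auto
    qed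
  qed
next
  show "sg ` {w. set w \<subseteq> S} \<subseteq> perm_group S star"
  proof clarify
    fix w assume "set w \<subseteq> S"
    then show "sg w \<in> perm_group S star"
    proof (induction w)
      case Nil
      have o: "(\<lambda>x\<in>S. x) = one GB" by (simp add: BijGroup_def)
      show ?case unfolding perm_group_def sg_Nil o by (rule generate.one)
    next
      case (Cons a w)
      have g1: "sg w \<in> generate GB (psi S star ` S)" using Cons by (simp add: perm_group_def)
      have g2: "psi S star a \<in> generate GB (psi S star ` S)" using Cons by (auto intro: generate.incl)
      have "sg w \<otimes>\<^bsub>GB\<^esub> psi S star a \<in> perm_group S star"
        unfolding perm_group_def by (rule generate.eng[OF g1 g2])
      then show ?case using Cons GB_mult sg_Bij psi_Bij by (simp add: sg_Cons)
    qed
  qed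
qed

lemma kinv: "set k \<subseteq> S \<Longrightarrow> set w \<subseteq> S \<Longrightarrow> set z \<subseteq> S \<Longrightarrow> sg k = (\<lambda>x\<in>S. x) \<Longrightarrow>
   DD z = (\<lambda>i. DD k i + DD w i) \<Longrightarrow> sg z = sg w"
proof -
  assume a: "set k \<subseteq> S" "set w \<subseteq> S" "set z \<subseteq> S" "sg k = (\<lambda>x\<in>S. x)" "DD z = (\<lambda>i. DD k i + DD w i)"
  have "DD (k @ w) = DD z" unfolding D_app[OF a(2,1)] a(4,5) by (auto simp: fun_eq_iff D_out)
  then have "sg z = sg (k @ w)" using wd[of z "k @ w"] a(1,2,3) by simp
  also have "\<dots> = sg w" unfolding sg_app[OF a(2,1)] a(4) using a(2) sg_ext by (auto simp: fun_eq_iff compose_def)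
  finally show ?thesis .
qed

lemma L5: "set a \<subseteq> S \<Longrightarrow> set a' \<subseteq> S \<Longrightarrow> set y \<subseteq> S \<Longrightarrow> set z \<subseteq> S \<Longrightarrow> set z' \<subseteq> S \<Longrightarrow>
  sg a = sg a' \<Longrightarrow> DD z = (\<lambda>i. DD a i + DD y i) \<Longrightarrow> DD z' = (\<lambda>i. DD a' i + DD y i) \<Longrightarrow> sg z = sg z'"
proof -
  assume a: "set a \<subseteq> S" "set a' \<subseteq> S" "set y \<subseteq> S" "set z \<subseteq> S" "set z' \<subseteq> S"
    "sg a = sg a'" "DD z = (\<lambda>i. DD a i + DD y i)" "DD z' = (\<lambda>i. DD a' i + DD y i)"
  obtain u where u: "set u \<subseteq> S" "sg (a @ u) = (\<lambda>x\<in>S. x)" using inv_word a by blast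
  have u': "sg (a' @ u) = (\<lambda>x\<in>S. x)" using sg_app[OF u(1) a(1)] sg_app[OF u(1) a(2)] a(6) u(2) by simp
  obtain Z where Z: "set Z \<subseteq> S" "DD Z = (\<lambda>i. DD (a' @ u) i + DD z i)"
    using surj[of "\<lambda>i. DD (a' @ u) i + DD z i"] D_out by auto
  have "sg Z = sg z" using kinv[of "a' @ u" z Z] Z u u' a by simp
  moreover have "DD Z = (\<lambda>i. DD (a @ u) i + DD z' i)"
    using Z a by (auto simp: fun_eq_iff D_app[OF u(1) a(1)] D_app[OF u(1) a(2)] D_out)
  then have "sg Z = sg z'" using kinv[of "a @ u" z' Z] Z u a by simp
  ultimately show ?thesis by simp
qed

lemma L5b: "set a \<subseteq> S \<Longrightarrow> set a' \<subseteq> S \<Longrightarrow> set b \<subseteq> S \<Longrightarrow> set b' \<subseteq> S \<Longrightarrow> set z \<subseteq> S \<Longrightarrow> set z' \<subseteq> S \<Longrightarrow>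
  sg a = sg a' \<Longrightarrow> sg b = sg b' \<Longrightarrow> DD z = (\<lambda>i. DD a i + DD b i) \<Longrightarrow> DD z' = (\<lambda>i. DD a' i + DD b' i) \<Longrightarrow> sg z = sg z'"
proof -
  assume a: "set a \<subseteq> S" "set a' \<subseteq> S" "set b \<subseteq> S" "set b' \<subseteq> S" "set z \<subseteq> S" "set z' \<subseteq> S"
   "sg a = sg a'" "sg b = sg b'" "DD z = (\<lambda>i. DD a i + DD b i)" "DD z' = (\<lambda>i. DD a' i + DD b' i)"
  obtain m where m: "set m \<subseteq> S" "DD m = (\<lambda>i. DD a' i + DD b i)"
    using surj[of "\<lambda>i. DD a' i + DD b i"] D_out by auto
  have 1: "sg z = sg m" using L5[of a a' b z m] a m by simp
  have "DD m = (\<lambda>i. DD b i + DD a' i)" "DD z' = (\<lambda>i. DD b' i + DD a' i)" using m a by (auto simp: fun_eq_iff)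
  then have "sg m = sg z'" using L5[of b b' a' m z'] a m by simp
  with 1 show ?thesis by simp
qed


lemma sum_ex: "set a \<subseteq> S \<Longrightarrow> set b \<subseteq> S \<Longrightarrow> \<exists>c. set c \<subseteq> S \<and> DD c = (\<lambda>i. DD a i + DD b i)"
  using surj[of "\<lambda>i. DD a i + DD b i"] D_out by auto

lemma elem: "x \<in> perm_group S star \<Longrightarrow> \<exists>a. set a \<subseteq> S \<and> x = sg a"
  using pg by auto

lemma elem2: "set a \<subseteq> S \<Longrightarrow> sg a \<in> perm_group S star"
  using pg by auto

definition "rep \<sigma> = (SOME w. set w \<subseteq> S \<and> sg w = \<sigma>)"
definition "padd \<sigma> \<tau> = sg (SOME z. set z \<subseteq> S \<and> DD z = (\<lambda>i. DD (rep \<sigma>) i + DD (rep \<tau>) i))"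

lemma rep: "set a \<subseteq> S \<Longrightarrow> set (rep (sg a)) \<subseteq> S \<and> sg (rep (sg a)) = sg a"
  unfolding rep_def by (rule someI[of _ a]) simp

lemma KEY: "set a \<subseteq> S \<Longrightarrow> set b \<subseteq> S \<Longrightarrow> set c \<subseteq> S \<Longrightarrow> DD c = (\<lambda>i. DD a i + DD b i) \<Longrightarrow> padd (sg a) (sg b) = sg c"
proof -
  assume a: "set a \<subseteq> S" "set b \<subseteq> S" "set c \<subseteq> S" "DD c = (\<lambda>i. DD a i + DD b i)"
  define z where "z = (SOME z. set z \<subseteq> S \<and> DD z = (\<lambda>i. DD (rep (sg a)) i + DD (rep (sg b)) i))"
  have ra: "set (rep (sg a)) \<subseteq> S" "sg (rep (sg a)) = sg a" using rep[OF a(1)] by auto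
  have rb: "set (rep (sg b)) \<subseteq> S" "sg (rep (sg b)) = sg b" using rep[OF a(2)] by auto
  have hz: "set z \<subseteq> S \<and> DD z = (\<lambda>i. DD (rep (sg a)) i + DD (rep (sg b)) i)"
    unfolding z_def by (rule someI_ex[OF sum_ex[OF ra(1) rb(1)]])
  have "padd (sg a) (sg b) = sg z" unfolding padd_def z_def ..
  also have "\<dots> = sg c"
    using L5b[of "rep (sg a)" a "rep (sg b)" b z c] ra rb hz a by simp
  finally show ?thesis .
qed

lemma CG: "comm_group \<lparr>carrier = perm_group S star, mult = padd, one = (\<lambda>x\<in>S. x)\<rparr>"
proof (rule comm_groupI, goal_cases)
  case (1 x y)
  then have "x \<in> perm_group S star" "y \<in> perm_group S star" by simp_all
  then obtain a b where ab: "set a \<subseteq> S" "set b \<subseteq> S" "x = sg a" "y = sg b" using elem by metis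
  obtain c where c: "set c \<subseteq> S" "DD c = (\<lambda>i. DD a i + DD b i)" using sum_ex[OF ab(1,2)] by blast
  show ?case using KEY[OF ab(1,2) c] ab c elem2 by simp
next
  case 2
  show ?case using elem2[of "[]"] by (simp add: sg_Nil)
next
  case (3 x y z)
  then have "x \<in> perm_group S star" "y \<in> perm_group S star" "z \<in> perm_group S star" by simp_all
  then obtain a b c where ab: "set a \<subseteq> S" "set b \<subseteq> S" "set c \<subseteq> S" "x = sg a" "y = sg b" "z = sg c"
    using elem by metis
  obtain d where d: "set d \<subseteq> S" "DD d = (\<lambda>i. DD a i + DD b i)" using sum_ex[OF ab(1,2)] by blast
  obtain e where e: "set e \<subseteq> S" "DD e = (\<lambda>i. DD d i + DD c i)" using sum_ex[OF d(1) ab(3)] by blast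
  obtain f where f: "set f \<subseteq> S" "DD f = (\<lambda>i. DD b i + DD c i)" using sum_ex[OF ab(2,3)] by blast
  obtain g where g: "set g \<subseteq> S" "DD g = (\<lambda>i. DD a i + DD f i)" using sum_ex[OF ab(1) f(1)] by blast
  have "DD e = DD g" using d e f g by (simp add: fun_eq_iff)
  then have "sg e = sg g" using wd[of e g] e g by simp
  then show ?case using KEY[OF ab(1,2) d] KEY[OF d(1) ab(3) e] KEY[OF ab(2,3) f] KEY[OF ab(1) f(1) g] ab by simp
next
  case (4 x y)
  then have "x \<in> perm_group S star" "y \<in> perm_group S star" by simp_all
  then obtain a b where ab: "set a \<subseteq> S" "set b \<subseteq> S" "x = sg a" "y = sg b" using elem by metis
  obtain c where c: "set c \<subseteq> S" "DD c = (\<lambda>i. DD a i + DD b i)" using sum_ex[OF ab(1,2)] by blast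
  have c': "DD c = (\<lambda>i. DD b i + DD a i)" using c by (simp add: fun_eq_iff)
  show ?case using KEY[OF ab(1,2) c] KEY[OF ab(2,1) c(1) c'] ab by simp
next
  case (5 x)
  then have "x \<in> perm_group S star" by simp
  then obtain a where a: "set a \<subseteq> S" "x = sg a" using elem by metis
  have "DD a = (\<lambda>i. DD [] i + DD a i)" by (simp add: D_Nil)
  then show ?case using KEY[of "[]" a a] a by (simp add: sg_Nil)
next
  case (6 x)
  then have "x \<in> perm_group S star" by simp
  then obtain a where a: "set a \<subseteq> S" "x = sg a" using elem by metis
  obtain u where u: "set u \<subseteq> S" "sg (a @ u) = (\<lambda>x\<in>S. x)" using inv_word[OF a(1)] by blast
  obtain b where b: "set b \<subseteq> S" "DD b = (\<lambda>i. if i \<in> S then DD u (sg a i) else 0)"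
    using surj[of "\<lambda>i. if i \<in> S then DD u (sg a i) else 0"] by auto
  have "DD (a @ u) = (\<lambda>i. DD b i + DD a i)"
    unfolding D_app[OF u(1) a(1)] b(2) by (auto simp: fun_eq_iff D_out)
  then have "padd (sg b) (sg a) = (\<lambda>x\<in>S. x)" using KEY[OF b(1) a(1), of "a @ u"] u a by simp
  then show ?case using elem2[OF b(1)] a by auto
qed

lemma compat: "compatible_add S star padd"
  unfolding compatible_add_def using KEY by auto

lemma uniq: "compatible_add S star add' \<Longrightarrow> x \<in> perm_group S star \<Longrightarrow> y \<in> perm_group S star \<Longrightarrow> add' x y = padd x y"
proof -
  assume h: "compatible_add S star add'" "x \<in> perm_group S star" "y \<in> perm_group S star"
  obtain a b where ab: "set a \<subseteq> S" "set b \<subseteq> S" "x = sg a" "y = sg b" using elem h by metis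
  obtain c where c: "set c \<subseteq> S" "DD c = (\<lambda>i. DD a i + DD b i)" using sum_ex[OF ab(1,2)] by blast
  have "add' x y = sg c" using h(1) ab c unfolding compatible_add_def by auto
  also have "\<dots> = padd x y" using KEY[OF ab(1,2) c] ab by simp
  finally show ?thesis .
qed

end

theorem mainTheorem13:
  fixes S :: "'a set" and star :: "'a \<Rightarrow> 'a \<Rightarrow> 'a"
  assumes "finite S" and "cycle_set S star"
  shows "\<exists>add zero.
           comm_group \<lparr>carrier = perm_group S star, mult = add, one = zero\<rparr> \<and>
           compatible_add S star add \<and>
           (\<forall>add'. compatible_add S star add' \<longrightarrow>
              (\<forall>x\<in>perm_group S star. \<forall>y\<in>perm_group S star. add' x y = add x y))"
proof -
  interpret cs S star using assms by (rule cs.intro)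
  show ?thesis using CG compat uniq by blast
qed

end
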